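(* Let $n\in\mathbb{N}$. Then the number $N_n$ of distinct $n\times n$ principal reversible squares equals $1$ if and only if $n$ is prime.
   Context: A reversible square matrix is a real matrix $M=(M_{i,j})$ with indices $i,j\in\mathbb{Z}_n=\mathbb{Z}/n\mathbb{Z}$ (top-left entry index $(1,1)$, indices computed modulo $n$) such that (R) $M_{i,j}+M_{i,n+1-j}=M_{i,k}+M_{i,n+1-k}$ and $M_{i,j}+M_{n+1-i,j}=M_{k,j}+M_{n+1-k,j}$ for all $i,j,k$, and (V) $M_{i,j}+M_{k,l}=M_{i,l}+M_{k,j}$ for all $i,j,k,l$. An $n\times n$ principal reversible square is a reversible square matrix whose set of entries is exactly $\{1,\dots,n^2\}$, whose entries increase along each row and each column, and with $M_{1,1}=1$, $M_{1,2}=2$. *)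

theory Defs
  imports Complex_Main "HOL-Computational_Algebra.Primes"
begin

text \<open>An n x n real matrix is modelled as a function nat => nat => real whose
  entries at indices (i,j) with 1 <= i,j <= n are the matrix entries; all other
  values are required to be 0, so distinct matrices correspond to distinct functions.
  Indices are taken modulo n via the representative in 1..n.\<close>

definition idx :: "nat \<Rightarrow> nat \<Rightarrow> nat" where
  "idx n k = (k + n - 1) mod n + 1"

definition matrix_of_size :: "nat \<Rightarrow> (nat \<Rightarrow> nat \<Rightarrow> real) \<Rightarrow> bool" where
  "matrix_of_size n M \<longleftrightarrow>
     (\<forall>i j. i \<notin> {1..n} \<or> j \<notin> {1..n} \<longrightarrow> M i j = 0)"

definition reversible_square :: "nat \<Rightarrow> (nat \<Rightarrow> nat \<Rightarrow> real) \<Rightarrow> bool" where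
  "reversible_square n M \<longleftrightarrow> matrix_of_size n M \<and>
     (\<forall>i\<in>{1..n}. \<forall>j\<in>{1..n}. \<forall>k\<in>{1..n}.
        M i j + M i (n + 1 - j) = M i k + M i (n + 1 - k) \<and>
        M i j + M (n + 1 - i) j = M k j + M (n + 1 - k) j) \<and>
     (\<forall>i\<in>{1..n}. \<forall>j\<in>{1..n}. \<forall>k\<in>{1..n}. \<forall>l\<in>{1..n}.
        M i j + M k l = M i l + M k j)"

definition principal_reversible_square :: "nat \<Rightarrow> (nat \<Rightarrow> nat \<Rightarrow> real) \<Rightarrow> bool" where
  "principal_reversible_square n M \<longleftrightarrow> reversible_square n M \<and>
     {M i j | i j. i \<in> {1..n} \<and> j \<in> {1..n}} = real ` {1..n^2} \<and>
     (\<forall>i\<in>{1..n}. \<forall>j\<in>{1..n}. \<forall>j'\<in>{1..n}. j < j' \<longrightarrow> M i j < M i j') \<and>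
     (\<forall>j\<in>{1..n}. \<forall>i\<in>{1..n}. \<forall>i'\<in>{1..n}. i < i' \<longrightarrow> M i j < M i' j) \<and>
     M (idx n 1) (idx n 1) = 1 \<and> M (idx n 1) (idx n 2) = 2"

end

theory Submission
  imports Defs
begin


lemma core:
  fixes A B :: "nat set" and N m :: nat
  assumes sumlt: "\<And>a b. a \<in> A \<Longrightarrow> b \<in> B \<Longrightarrow> a + b < N"
    and cover: "\<And>t. t < N \<Longrightarrow> \<exists>a\<in>A. \<exists>b\<in>B. t = a + b"
    and uniq: "\<And>a b a' b'. a \<in> A \<Longrightarrow> b \<in> B \<Longrightarrow> a' \<in> A \<Longrightarrow> b' \<in> B \<Longrightarrow> a + b = a' + b' \<Longrightarrow> a = a'"
    and A0: "0 \<in> A" and B0: "0 \<in> B" and mA: "m \<in> A" and mpos: "0 < m"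
    and Bm: "\<And>s. s < m \<Longrightarrow> s \<in> B"
  shows "(t \<in> A \<longrightarrow> m dvd t) \<and> (t \<in> B \<longrightarrow> t - t mod m \<in> B) \<and> (t - t mod m \<in> B \<longrightarrow> t \<in> B)"
proof (induction t rule: less_induct)
  case (less t)
  define c where "c = t div m"
  define r where "r = t mod m"
  have t_eq: "t = c*m + r" using c_def r_def by simp
  have r_lt: "r < m" using mpos r_def by simp
  have cm: "t - t mod m = c*m" using t_eq r_def by simp
  have IA: "\<And>x. x < t \<Longrightarrow> x \<in> A \<Longrightarrow> m dvd x" using less.IH by blast
  have IB1: "\<And>x. x < t \<Longrightarrow> x \<in> B \<Longrightarrow> x - x mod m \<in> B" using less.IH by blast
  have IB2: "\<And>x. x < t \<Longrightarrow> x - x mod m \<in> B \<Longrightarrow> x \<in> B" using less.IH by blast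
  have modr: "(x + r) mod m = r" if "m dvd x" for x
    using that r_lt by (auto elim!: dvdE)
  have PA: "t \<in> A \<longrightarrow> m dvd t"
  proof
    assume tA: "t \<in> A"
    show "m dvd t"
    proof (rule ccontr)
      assume nd: "\<not> m dvd t"
      then have r1: "r > 0" using r_def by (simp add: dvd_eq_mod_eq_0)
      have "t < N" using sumlt[OF tA B0] by simp
      then have "c*m < N" using t_eq by linarith
      then obtain \<alpha> \<beta> where \<alpha>: "\<alpha> \<in> A" "\<beta> \<in> B" "c*m = \<alpha> + \<beta>" using cover by blast
      consider "\<alpha> = 0" | "0 < \<alpha> \<and> \<alpha> < c*m" | "\<alpha> = c*m" using \<alpha> by linarith
      then show False
      proof cases
        case 1
        then have cmB: "c*m \<in> B" using \<alpha> by simp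
        show False
        proof (cases "c = 0")
          case True
          then have "t \<in> B" using t_eq Bm r_lt by simp
          then have "t = 0" using uniq[OF tA B0 A0 \<open>t\<in>B\<close>] by simp
          then show False using r1 t_eq by simp
        next
          case False
          have mr: "m - r \<in> B" using Bm r1 r_lt by simp
          have "m + c*m = t + (m - r)" using t_eq r_lt by simp
          then have "m = t" using uniq[OF mA cmB tA mr] by simp
          moreover have "c*m \<ge> m" using False by simp
          ultimately show False using t_eq r1 by linarith
        qed
      next
        case 2
        then have dA: "m dvd \<alpha>" using IA \<alpha> t_eq by auto
        have dcm: "m dvd c*m" by simp
        have dB: "m dvd \<beta>" using dvd_diff_nat[OF dcm dA] \<alpha> by simp
        define t' where "t' = \<beta> + r"
        have lt: "t' < t" using 2 \<alpha> t_eq t'_def by simp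
        have "t' mod m = r" using modr[OF dB] t'_def by simp
        then have "t' - t' mod m = \<beta>" using t'_def by simp
        then have t'B: "t' \<in> B" using IB2[OF lt] \<alpha> by simp
        have "t + 0 = \<alpha> + t'" using t_eq \<alpha> t'_def by simp
        then have "t = \<alpha>" using uniq[OF tA B0 \<alpha>(1) t'B] by simp
        then show False using 2 t_eq by simp
      next
        case 3
        then have cmA: "c*m \<in> A" using \<alpha> by simp
        have "c*m + r = t + 0" using t_eq by simp
        then have "c*m = t" using uniq[OF cmA Bm[OF r_lt] tA B0] by simp
        then show False using r1 t_eq by simp
      qed
    qed
  qed
  have PB1: "t \<in> B \<longrightarrow> t - t mod m \<in> B"
  proof
    assume tB: "t \<in> B"
    have "t < N" using sumlt[OF A0 tB] by simp
    then have "c*m < N" using t_eq by linarith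
    then obtain \<alpha> \<beta> where \<alpha>: "\<alpha> \<in> A" "\<beta> \<in> B" "c*m = \<alpha> + \<beta>" using cover by blast
    consider "\<alpha> = 0" | "0 < \<alpha> \<and> \<alpha> < c*m" | "\<alpha> = c*m" using \<alpha> by linarith
    then show "t - t mod m \<in> B"
    proof cases
      case 1
      then show ?thesis using \<alpha> cm by simp
    next
      case 3
      then have cmA: "c*m \<in> A" using \<alpha> by simp
      have "c*m + r = 0 + t" using t_eq by simp
      then have "c*m = 0" using uniq[OF cmA Bm[OF r_lt] A0 tB] by simp
      then show ?thesis using cm B0 by auto
    next
      case 2
      then have dA: "m dvd \<alpha>" using IA \<alpha> t_eq by auto
      have dcm: "m dvd c*m" by simp
      have dB: "m dvd \<beta>" using dvd_diff_nat[OF dcm dA] \<alpha> by simp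
      define t' where "t' = \<beta> + r"
      have lt: "t' < t" using 2 \<alpha> t_eq t'_def by simp
      have "t' mod m = r" using modr[OF dB] t'_def by simp
      then have "t' - t' mod m = \<beta>" using t'_def by simp
      then have t'B: "t' \<in> B" using IB2[OF lt] \<alpha> by simp
      have "\<alpha> + t' = 0 + t" using t_eq \<alpha> t'_def by simp
      then have "\<alpha> = 0" using uniq[OF \<alpha>(1) t'B A0 tB] by simp
      then show ?thesis using 2 by simp
    qed
  qed
  have PB2: "t - t mod m \<in> B \<longrightarrow> t \<in> B"
  proof
    assume "t - t mod m \<in> B"
    then have cmB: "c*m \<in> B" using cm by simp
    have "m + c*m < N" using sumlt[OF mA cmB] .
    then have "t < N" using t_eq r_lt by linarith
    then obtain \<alpha> \<beta> where \<alpha>: "\<alpha> \<in> A" "\<beta> \<in> B" "t = \<alpha> + \<beta>" using cover by blast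
    have dA: "m dvd \<alpha>"
    proof (cases "\<alpha> < t")
      case True then show ?thesis using IA \<alpha> by blast
    next
      case False then have "\<alpha> = t" using \<alpha> by simp
      then show ?thesis using PA \<alpha> by simp
    qed
    then obtain k where k: "\<alpha> = m*k" by (auto elim: dvdE)
    consider "\<alpha> = 0" | "0 < \<alpha> \<and> \<alpha> < c*m" | "c*m \<le> \<alpha>" by linarith
    then show "t \<in> B"
    proof cases
      case 1 then show ?thesis using \<alpha> by simp
    next
      case 3
      have "c * m \<le> k * m" using 3 k by (simp add: mult.commute)
      then have ck: "c \<le> k" using mpos by simp
      have "k * m < (c+1) * m" using k \<alpha> t_eq r_lt by (simp add: mult.commute)
      then have "k < c + 1" using mpos mult_less_cancel2 by blast
      then have "\<alpha> = c*m" using ck k by simp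
      then have cmA: "c*m \<in> A" using \<alpha> by simp
      have "c*m + 0 = 0 + c*m" by simp
      then have "c*m = 0" using uniq[OF cmA B0 A0 cmB] by simp
      then show ?thesis using t_eq Bm r_lt by simp
    next
      case 2
      have "k < c" using 2 k mpos by (simp add: mult.commute)
      have \<beta>eq: "\<beta> = m*(c-k) + r" using \<alpha> k t_eq \<open>k < c\<close> by (simp add: diff_mult_distrib2 mult.commute)
      have lt: "\<beta> < t" using 2 \<alpha> by simp
      have "\<beta> mod m = r" using \<beta>eq r_lt by simp
      then have "\<beta> - r \<in> B" using IB1[OF lt \<alpha>(2)] by simp
      moreover have "\<alpha> + (\<beta> - r) = 0 + c*m" using \<beta>eq \<alpha> t_eq by simp
      ultimately have "\<alpha> = 0" using uniq[OF \<alpha>(1) _ A0 cmB] by blast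
      then show ?thesis using 2 by simp
    qed
  qed
  show ?case using PA PB1 PB2 by blast
qed



lemma mono_id:
  fixes f :: "nat \<Rightarrow> nat"
  assumes mono: "\<And>i j. 1 \<le> i \<Longrightarrow> i < j \<Longrightarrow> j \<le> n \<Longrightarrow> f i < f j"
    and bnd: "\<And>j. 1 \<le> j \<Longrightarrow> j \<le> n \<Longrightarrow> f j < n"
    and j: "1 \<le> j" "j \<le> n"
  shows "f j = j - 1"
proof -
  have step: "1 \<le> i \<Longrightarrow> i + d \<le> n \<Longrightarrow> f i + d \<le> f (i + d)" for i d
  proof (induction d)
    case 0 then show ?case by simp
  next
    case (Suc d)
    then have "f i + d \<le> f (i + d)" by simp
    moreover have "f (i + d) < f (i + Suc d)" using mono[of "i+d" "i + Suc d"] Suc.prems by simp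
    ultimately show ?case by simp
  qed
  have "f 1 + (j - 1) \<le> f j" using step[of 1 "j-1"] j by simp
  moreover have "f j + (n - j) \<le> f n" using step[of j "n-j"] j by simp
  moreover have "f n < n" using bnd[of n] j by simp
  ultimately show ?thesis using j by linarith
qed

definition std :: "nat \<Rightarrow> nat \<Rightarrow> nat \<Rightarrow> real" where
  "std n i j = (if i \<in> {1..n} \<and> j \<in> {1..n} then real ((i-1)*n + j) else 0)"

lemma idx1: "n \<ge> 1 \<Longrightarrow> idx n 1 = 1" by (simp add: idx_def)
lemma idx2: assumes "n \<ge> 2" shows "idx n 2 = 2"
proof -
  have "Suc n mod n = Suc 0" using assms by (simp add: mod_Suc)
  then show ?thesis using assms by (simp add: idx_def)
qed

lemma entries_eq: "{M i j | i j. i \<in> {1..n} \<and> j \<in> {1..n}} = (\<lambda>(i,j). M i j) ` ({1..n} \<times> {1..n})"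
  by (auto simp: image_iff) blast

lemma prime_unique:
  assumes pn: "prime n" and P: "principal_reversible_square n M"
  shows "M = std n"
proof -
  have n2: "n \<ge> 2" using pn prime_ge_2_nat by blast
  note Pc = P[unfolded principal_reversible_square_def]
  have RS: "reversible_square n M" using Pc by (rule conjunct1)
  have entS: "{M i j | i j. i \<in> {1..n} \<and> j \<in> {1..n}} = real ` {1..n^2}"
    using Pc by (rule conjunct2[THEN conjunct1])
  have rowall: "\<forall>i\<in>{1..n}. \<forall>j\<in>{1..n}. \<forall>j'\<in>{1..n}. j < j' \<longrightarrow> M i j < M i j'"
    using Pc by (rule conjunct2[THEN conjunct2, THEN conjunct1])
  have colall: "\<forall>j\<in>{1..n}. \<forall>i\<in>{1..n}. \<forall>i'\<in>{1..n}. i < i' \<longrightarrow> M i j < M i' j"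
    using Pc by (rule conjunct2[THEN conjunct2, THEN conjunct2, THEN conjunct1])
  have idxs: "M (idx n 1) (idx n 1) = 1 \<and> M (idx n 1) (idx n 2) = 2"
    using Pc by (rule conjunct2[THEN conjunct2, THEN conjunct2, THEN conjunct2])
  note RSc = RS[unfolded reversible_square_def]
  have ms: "matrix_of_size n M" using RSc by (rule conjunct1)
  have Vall: "\<forall>i\<in>{1..n}. \<forall>j\<in>{1..n}. \<forall>k\<in>{1..n}. \<forall>l\<in>{1..n}. M i j + M k l = M i l + M k j"
    using RSc by (rule conjunct2[THEN conjunct2])
  have V: "\<And>i j k l. i\<in>{1..n} \<Longrightarrow> j\<in>{1..n} \<Longrightarrow> k\<in>{1..n} \<Longrightarrow> l\<in>{1..n} \<Longrightarrow> M i j + M k l = M i l + M k j"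
    using Vall by blast
  have ent: "(\<lambda>(i,j). M i j) ` ({1..n} \<times> {1..n}) = real ` {1..n^2}"
    using entS unfolding entries_eq .
  have rowinc: "\<And>i j j'. i\<in>{1..n} \<Longrightarrow> j\<in>{1..n} \<Longrightarrow> j'\<in>{1..n} \<Longrightarrow> j < j' \<Longrightarrow> M i j < M i j'"
    using rowall by blast
  have colinc: "\<And>j i i'. j\<in>{1..n} \<Longrightarrow> i\<in>{1..n} \<Longrightarrow> i'\<in>{1..n} \<Longrightarrow> i < i' \<Longrightarrow> M i j < M i' j"
    using colall by blast
  have M11: "M 1 1 = 1" and M12: "M 1 2 = 2"
    using idxs idx1[of n] idx2[of n] n2 by auto
  define e where "e i j = nat \<lfloor>M i j\<rfloor>" for i j
  have eM: "real (e i j) = M i j" "1 \<le> e i j" "e i j \<le> n^2" if "i \<in> {1..n}" "j \<in> {1..n}" for i j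
  proof -
    have "M i j \<in> real ` {1..n^2}" using ent that by force
    then obtain k where "k \<in> {1..n^2}" "M i j = real k" by blast
    then show "real (e i j) = M i j" "1 \<le> e i j" "e i j \<le> n^2" unfolding e_def by auto
  qed
  have inj: "inj_on (\<lambda>(i,j). M i j) ({1..n} \<times> {1..n})"
  proof -
    have "card ((\<lambda>(i,j). M i j) ` ({1..n} \<times> {1..n})) = n^2"
      using ent by (simp add: card_image)
    also have "\<dots> = card ({1..n} \<times> {1..n})" by (simp add: power2_eq_square)
    finally show ?thesis by (simp add: inj_on_iff_eq_card)
  qed
  define a where "a i = e i 1 - 1" for i
  define b where "b j = e 1 j - 1" for j
  have one: "1 \<in> {1..n}" "2 \<in> {1..n}" using n2 by auto
  have abe: "e i j = a i + b j + 1" if "i \<in> {1..n}" "j \<in> {1..n}" for i j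
  proof -
    have "M i j + M 1 1 = M i 1 + M 1 j" using V[OF that(1) that(2) one(1) one(1)] by simp
    then have "real (e i j) + real (e 1 1) = real (e i 1) + real (e 1 j)"
      using eM that one by simp
    then have "e i j + e 1 1 = e i 1 + e 1 j" by linarith
    moreover have "e 1 1 = 1" using eM(1)[OF one(1) one(1)] M11 by simp
    ultimately show ?thesis unfolding a_def b_def using eM(2)[OF that(1) one(1)] eM(2)[OF one(1) that(2)] by simp
  qed
  have amono: "a i < a i'" if "i\<in>{1..n}" "i'\<in>{1..n}" "i < i'" for i i'
  proof -
    have "M i 1 < M i' 1" using colinc[OF one(1) that] .
    then have "e i 1 < e i' 1" using eM that one by (metis of_nat_less_iff)
    then show ?thesis unfolding a_def using eM(2)[OF that(1) one(1)] by simp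
  qed
  have bmono: "b j < b j'" if "j\<in>{1..n}" "j'\<in>{1..n}" "j < j'" for j j'
  proof -
    have "M 1 j < M 1 j'" using rowinc[OF one(1) that] .
    then have "e 1 j < e 1 j'" using eM that one by (metis of_nat_less_iff)
    then show ?thesis unfolding b_def using eM(2)[OF one(1) that(1)] by simp
  qed
  have a1: "a 1 = 0" and b1: "b 1 = 0" and b2: "b 2 = 1"
    using eM(1)[OF one(1) one(1)] eM(1)[OF one(1) one(2)] M11 M12 unfolding a_def b_def by auto
  define A where "A = a ` {1..n}"
  define B where "B = b ` {1..n}"
  define N where "N = n^2"
  have einj: "i = i' \<and> j = j'" if "i\<in>{1..n}" "j\<in>{1..n}" "i'\<in>{1..n}" "j'\<in>{1..n}" "e i j = e i' j'" for i j i' j'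
  proof -
    have "M i j = M i' j'" by (metis eM(1)[OF that(1) that(2)] eM(1)[OF that(3) that(4)] that(5))
    then have "(i,j) = (i',j')" using inj_onD[OF inj, of "(i,j)" "(i',j')"] that(1-4) by simp
    then show ?thesis by simp
  qed
  have sumlt: "\<And>x y. x \<in> A \<Longrightarrow> y \<in> B \<Longrightarrow> x + y < N"
  proof -
    fix x y assume "x \<in> A" "y \<in> B"
    then obtain i j where "i \<in> {1..n}" "j \<in> {1..n}" "x = a i" "y = b j" unfolding A_def B_def by blast
    then show "x + y < N" using abe eM(3) unfolding N_def by fastforce
  qed
  have cover: "\<And>t. t < N \<Longrightarrow> \<exists>x\<in>A. \<exists>y\<in>B. t = x + y"
  proof -
    fix t assume "t < N"
    then have "t + 1 \<in> {1..n^2}" unfolding N_def by simp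
    then have "real (t+1) \<in> real ` {1..n^2}" by (rule imageI)
    then have "real (t+1) \<in> (\<lambda>(i,j). M i j) ` ({1..n} \<times> {1..n})" unfolding ent .
    then obtain i j where ij: "i \<in> {1..n}" "j \<in> {1..n}" "M i j = real (t+1)" by auto
    then have "e i j = t + 1" using eM by (metis of_nat_eq_iff)
    then have "t = a i + b j" using abe ij by simp
    then show "\<exists>x\<in>A. \<exists>y\<in>B. t = x + y" using ij unfolding A_def B_def by blast
  qed
  have uniq: "\<And>x y x' y'. x \<in> A \<Longrightarrow> y \<in> B \<Longrightarrow> x' \<in> A \<Longrightarrow> y' \<in> B \<Longrightarrow> x + y = x' + y' \<Longrightarrow> x = x'"
  proof -
    fix x y x' y' assume "x \<in> A" "y \<in> B" "x' \<in> A" "y' \<in> B" "x + y = x' + y'"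
    then obtain i j i' j' where ij: "i \<in> {1..n}" "j \<in> {1..n}" "x = a i" "y = b j"
        "i' \<in> {1..n}" "j' \<in> {1..n}" "x' = a i'" "y' = b j'" "x + y = x' + y'" unfolding A_def B_def by blast
    then have "e i j = e i' j'" using abe by simp
    then have "i = i'" using einj ij by blast
    then show "x = x'" using ij by simp
  qed
  have A0: "0 \<in> A" unfolding A_def by (rule rev_image_eqI[of _ _ _ a, OF one(1) a1[symmetric]])
  have B0: "0 \<in> B" unfolding B_def by (rule rev_image_eqI[of _ _ _ b, OF one(1) b1[symmetric]])
  have B1: "1 \<in> B" unfolding B_def by (rule rev_image_eqI[of _ _ _ b, OF one(2) b2[symmetric]])
  have cardB: "card B = n"
  proof -
    have "inj_on b {1..n}" using bmono unfolding inj_on_def by (metis linorder_neqE_nat less_irrefl)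
    then show ?thesis unfolding B_def by (simp add: card_image)
  qed
  have finB: "finite B" unfolding B_def by simp
  define m where "m = (LEAST x. x \<notin> B)"
  have ex: "\<exists>x. x \<notin> B" using finB ex_new_if_finite infinite_UNIV_nat by blast
  have mB: "m \<notin> B" unfolding m_def using LeastI_ex[OF ex] .
  have Bm: "\<And>s. s < m \<Longrightarrow> s \<in> B" unfolding m_def using not_less_Least by blast
  have m2: "m \<ge> 2" using mB B0 B1 by (cases m; cases "m - 1"; auto)
  have "{..<m} \<subseteq> B" using Bm by auto
  then have "card {..<m} \<le> card B" by (rule card_mono[OF finB])
  then have "m \<le> n" using cardB by simp
  moreover have "n < n * n" using n2 by simp
  ultimately have "m < n * n" by linarith
  then have "m < N" unfolding N_def by (simp add: power2_eq_square)
  then obtain \<alpha> \<beta> where ab: "\<alpha> \<in> A" "\<beta> \<in> B" "m = \<alpha> + \<beta>" using cover by blast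
  have mA: "m \<in> A"
  proof -
    have "\<alpha> \<noteq> 0"
    proof
      assume "\<alpha> = 0" then have "m = \<beta>" using ab by simp
      then show False using ab(2) mB by simp
    qed
    moreover have "\<not> \<alpha> < m"
    proof
      assume "\<alpha> < m"
      then have "\<alpha> \<in> B" using Bm by simp
      then have "\<alpha> = 0" using uniq[OF ab(1) B0 A0 \<open>\<alpha> \<in> B\<close>] by simp
      then show False using \<open>\<alpha> \<noteq> 0\<close> by simp
    qed
    ultimately have "\<alpha> = m" using ab by simp
    then show ?thesis using ab by simp
  qed
  have C: "\<And>t. (t \<in> A \<longrightarrow> m dvd t) \<and> (t \<in> B \<longrightarrow> t - t mod m \<in> B) \<and> (t - t mod m \<in> B \<longrightarrow> t \<in> B)"
  proof -
    fix t
    have mpos: "0 < m" using m2 by simp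
    show "?thesis t" by (rule core[OF sumlt cover uniq A0 B0 mA mpos Bm])
  qed
  define Z where "Z = {x \<in> B. m dvd x}"
  have Beq: "B = (\<lambda>(x,s). x + s) ` (Z \<times> {..<m})"
  proof
    show "B \<subseteq> (\<lambda>(x,s). x + s) ` (Z \<times> {..<m})"
    proof
      fix y assume yB: "y \<in> B"
      have "y - y mod m \<in> B" using C[of y] yB by blast
      moreover have "m dvd (y - y mod m)" by (simp add: minus_mod_eq_mult_div)
      ultimately have "y - y mod m \<in> Z" unfolding Z_def by blast
      moreover have "y mod m < m" using m2 by simp
      ultimately have "(y - y mod m, y mod m) \<in> Z \<times> {..<m}" by simp
      moreover have "y = (\<lambda>(x,s). x + s) (y - y mod m, y mod m)" by simp
      ultimately show "y \<in> (\<lambda>(x,s). x + s) ` (Z \<times> {..<m})" by (rule rev_image_eqI)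
    qed
  next
    show "(\<lambda>(x,s). x + s) ` (Z \<times> {..<m}) \<subseteq> B"
    proof clarify
      fix x s assume xZ: "x \<in> Z" and sm: "s < m"
      then have xB: "x \<in> B" and dx: "m dvd x" unfolding Z_def by auto
      from dx obtain k where k: "x = m*k" by (rule dvdE)
      have "(x + s) - (x + s) mod m = x" using k sm by simp
      then show "x + s \<in> B" using C[of "x+s"] xB by simp
    qed
  qed
  have injB: "inj_on (\<lambda>(x,s). x + s) (Z \<times> {..<m})"
  proof (rule inj_onI, clarify)
    fix x s x' s' assume h: "x \<in> Z" "s < m" "x' \<in> Z" "s' < m" "x + s = x' + s'"
    from h(1) obtain k where k: "x = m*k" unfolding Z_def by (auto elim: dvdE)
    from h(3) obtain k' where k': "x' = m*k'" unfolding Z_def by (auto elim: dvdE)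
    have "(x + s) mod m = s" using k h(2) by simp
    moreover have "(x' + s') mod m = s'" using k' h(4) by simp
    ultimately have "s = s'" using h(5) by simp
    then show "x = x' \<and> s = s'" using h(5) by simp
  qed
  have "card B = card (Z \<times> {..<m})" using card_image[OF injB] Beq by simp
  also have "\<dots> = card Z * m" by (simp add: card_cartesian_product)
  finally have "m dvd n" using cardB by simp
  then have mn: "m = n" using pn m2 unfolding prime_nat_iff by auto
  have Beq2: "B = {..<n}"
  proof -
    have "{..<n} \<subseteq> B" using \<open>{..<m} \<subseteq> B\<close> mn by simp
    moreover have "card {..<n} = card B" using cardB by simp
    ultimately show ?thesis using card_subset_eq[OF finB] by metis
  qed
  have bval: "b j = j - 1" if "j \<in> {1..n}" for j
    by (rule mono_id[of n b]) (use bmono Beq2 that in \<open>auto simp: B_def\<close>)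
  define c where "c i = a i div n" for i
  have ac: "a i = c i * n" if "i \<in> {1..n}" for i
  proof -
    have "a i \<in> A" using that unfolding A_def by blast
    then have "n dvd a i" using C mn by blast
    then show ?thesis unfolding c_def by simp
  qed
  have cval: "c i = i - 1" if "i \<in> {1..n}" for i
  proof (rule mono_id[of n c])
    show "c i' < c j'" if "1 \<le> i'" "i' < j'" "j' \<le> n" for i' j'
    proof -
      have "a i' < a j'" using amono that by simp
      then show ?thesis using ac that by (simp add: mult.commute) 
    qed
    show "c j < n" if "1 \<le> j" "j \<le> n" for j
    proof -
      have "a j + 0 < N" using sumlt[OF _ B0] that unfolding A_def by simp
      then have "c j * n < n * n" using ac that unfolding N_def by (simp add: power2_eq_square)
      then show ?thesis by simp
    qed
  qed (use that in auto)
  show ?thesis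
  proof (rule ext, rule ext)
    fix i j
    show "M i j = std n i j"
    proof (cases "i \<in> {1..n} \<and> j \<in> {1..n}")
      case True
      then have "e i j = (i-1)*n + (j - 1) + 1" using abe ac cval bval by simp
      then have "e i j = (i-1)*n + j" using True by simp
      then show ?thesis using eM(1) True unfolding std_def by metis
    next
      case False
      then show ?thesis using ms unfolding matrix_of_size_def std_def by auto
    qed
  qed
qed



definition bb :: "nat \<Rightarrow> nat \<Rightarrow> nat \<Rightarrow> nat" where
  "bb p n u = u mod p + p*n*(u div p)"

definition G :: "nat \<Rightarrow> nat \<Rightarrow> nat \<Rightarrow> nat \<Rightarrow> real" where
  "G p q i j = (if i \<in> {1..p*q} \<and> j \<in> {1..p*q} then real (p*(i-1) + bb p (p*q) (j-1) + 1) else 0)"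

lemma bb_sym:
  assumes p: "p > 0" and u: "u < p*q"
  shows "bb p n u + bb p n (p*q - 1 - u) = (p - 1) + p*n*(q - 1)"
proof -
  define x where "x = u mod p"
  define y where "y = u div p"
  have ux: "u = p*y + x" unfolding x_def y_def by simp
  have xp: "x < p" using p unfolding x_def by simp
  have yq: "y < q"
  proof (rule ccontr)
    assume "\<not> y < q" then have "p*q \<le> p*y" by simp
    then show False using ux u by linarith
  qed
  define d where "d = q - 1 - y"
  have qd: "q = d + y + 1" using yq unfolding d_def by simp
  have pq: "p*q = p*d + p*y + p" unfolding qd by (simp add: algebra_simps)
  have e: "p*q - 1 - u = (p - 1 - x) + p*(q - 1 - y)"
    unfolding d_def[symmetric] pq ux using xp by simp
  have gm: "(r + p*k) mod p = r" "(r + p*k) div p = k" if "r < p" for r k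
    using that by simp_all
  have rl: "p - 1 - x < p" using p by simp
  have m1: "(p*q - 1 - u) mod p = p - 1 - x" unfolding e by (rule gm(1)[OF rl])
  have d1: "(p*q - 1 - u) div p = q - 1 - y" unfolding e by (rule gm(2)[OF rl])
  have s1: "x + (p-1-x) = p-1" using xp by simp
  have s2: "y + (q-1-y) = q-1" using yq by simp
  have s3: "p*n*y + p*n*(q-1-y) = p*n*(q-1)" by (metis s2 add_mult_distrib2)
  have "bb p n u + bb p n (p*q - 1 - u) = (x + p*n*y) + ((p-1-x) + p*n*(q-1-y))"
    unfolding bb_def m1 d1 x_def y_def by simp
  also have "\<dots> = (x + (p-1-x)) + (p*n*y + p*n*(q-1-y))" by simp
  also have "\<dots> = (p - 1) + p*n*(q - 1)" unfolding s1 s3 ..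
  finally show ?thesis .
qed

lemma bb_mono:
  assumes p: "p > 0" and n: "n \<ge> 1" and uu: "u < u'"
  shows "bb p n u < bb p n u'"
proof -
  define x where "x = u mod p"
  define y where "y = u div p"
  define x' where "x' = u' mod p"
  define y' where "y' = u' div p"
  have ux: "u = p*y + x" unfolding x_def y_def by simp
  have ux': "u' = p*y' + x'" unfolding x'_def y'_def by simp
  have xp: "x < p" using p unfolding x_def by simp
  have yy: "y \<le> y'" unfolding y_def y'_def using uu by (simp add: div_le_mono)
  have bu: "bb p n u = x + p*n*y" unfolding bb_def x_def y_def by simp
  have bu': "bb p n u' = x' + p*n*y'" unfolding bb_def x'_def y'_def by simp
  show ?thesis
  proof (cases "y = y'")
    case True
    then have "x < x'" using ux ux' uu by simp
    then show ?thesis using bu bu' True by simp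
  next
    case False
    then have "y + 1 \<le> y'" using yy by simp
    then have "p*n*(y+1) \<le> p*n*y'" by (rule mult_le_mono2)
    moreover have "p \<le> p*n" using n by simp
    moreover have "p*n*(y+1) = p*n + p*n*y" by (simp add: algebra_simps)
    ultimately show ?thesis using bu bu' xp by linarith
  qed
qed

lemma val_bound:
  assumes p: "p > 0" and i: "1 \<le> i" "i \<le> p*q" and u: "u < p*q"
  shows "p*(i-1) + bb p (p*q) u + 1 \<le> (p*q)^2"
proof -
  define n where "n = p*q"
  define x where "x = u mod p"
  define y where "y = u div p"
  have ux: "u = p*y + x" unfolding x_def y_def by simp
  have xp: "x < p" using p unfolding x_def by simp
  have yq: "y + 1 \<le> q"
  proof (rule ccontr)
    assume "\<not> y + 1 \<le> q" then have "q \<le> y" by simp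
    then have "p*q \<le> p*y" by simp
    then show False using ux u by linarith
  qed
  have "p*(i-1) + p = p*i" using i by (cases i) (simp_all add: algebra_simps)
  moreover have "p*i \<le> p*n" using i unfolding n_def by simp
  ultimately have h1: "p*(i-1) + x < p*n" using xp by linarith
  have "p*n*(y+1) \<le> p*n*q" using yq by (rule mult_le_mono2)
  moreover have "p*n*(y+1) = p*n + p*n*y" by (simp add: algebra_simps)
  moreover have "p*n*q = n*n" unfolding n_def by (simp add: algebra_simps)
  ultimately have "p*(i-1) + x + p*n*y < n*n" using h1 by linarith
  moreover have "bb p n u = x + p*n*y" unfolding bb_def x_def y_def by simp
  ultimately show ?thesis unfolding n_def[symmetric] by (simp add: power2_eq_square)
qed

lemma val_surj:
  assumes p: "p > 0" and q: "q > 0" and t: "t < (p*q)^2"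
  shows "\<exists>i j. i \<in> {1..p*q} \<and> j \<in> {1..p*q} \<and> p*(i-1) + bb p (p*q) (j-1) + 1 = t + 1"
proof -
  define n where "n = p*q"
  have npos: "n > 0" using p q unfolding n_def by simp
  define x where "x = t mod p"
  define D where "D = t div p"
  define y where "y = t div (p*n)"
  have yD: "y = D div n" unfolding y_def D_def by (simp add: div_mult2_eq)
  have tx: "t = x + p*D" unfolding x_def D_def by simp
  have Dn: "D = D mod n + n*(D div n)" by simp
  have xp: "x < p" using p unfolding x_def by simp
  have yq: "y < q"
  proof (rule ccontr)
    assume "\<not> y < q" then have "q \<le> y" by simp
    then have "p*n*q \<le> p*n*y" by (rule mult_le_mono2)
    moreover have "p*n*y \<le> t" unfolding y_def using times_div_less_eq_dividend[of "p*n" t] by simp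
    moreover have "p*n*q = n*n" unfolding n_def by (simp add: algebra_simps)
    moreover have "t < n*n" using t unfolding n_def by (simp add: power2_eq_square)
    ultimately show False by linarith
  qed
  define i where "i = D mod n + 1"
  define j where "j = x + p*y + 1"
  have "D mod n < n" using npos by simp
  then have i_in: "i \<in> {1..n}" unfolding i_def by simp
  have "x + p*y < p + p*y" using xp by simp
  also have "\<dots> = p*(y+1)" by (simp add: algebra_simps)
  also have "\<dots> \<le> p*q" using yq by (intro mult_le_mono2) simp
  finally have j_in: "j \<in> {1..n}" unfolding j_def n_def by simp
  have jm: "(j-1) mod p = x" "(j-1) div p = y" unfolding j_def using xp by simp_all
  have "p*(i-1) + bb p n (j-1) + 1 = p*(D mod n) + x + p*n*y + 1"
    unfolding bb_def jm i_def by simp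
  also have "\<dots> = t + 1"
  proof -
    have "p*D = p*(D mod n + n*(D div n))" by simp
    also have "\<dots> = p*(D mod n) + p*n*(D div n)" by (simp only: add_mult_distrib2 mult.assoc)
    finally have "p*D = p*(D mod n) + p*n*y" unfolding yD .
    then show ?thesis using tx by linarith
  qed
  finally show ?thesis using i_in j_in unfolding n_def by blast
qed

lemma entries_eq': "{M i j | i j. i \<in> {1..n} \<and> j \<in> {1..n}} = (\<lambda>(i,j). M i j) ` ({1..n} \<times> {1..n})"
  by (auto simp: image_iff) blast

lemma idx1': "n \<ge> 1 \<Longrightarrow> idx n 1 = 1" by (simp add: idx_def)
lemma idx2': assumes "n \<ge> 2" shows "idx n 2 = 2"
proof -
  have "Suc n mod n = Suc 0" using assms by (simp add: mod_Suc)
  then show ?thesis using assms by (simp add: idx_def)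
qed

lemma G_principal:
  assumes p: "p \<ge> 2" and q: "q \<ge> 1"
  shows "principal_reversible_square (p*q) (G p q)"
proof -
  define n where "n = p*q"
  have n2: "n \<ge> 2" unfolding n_def using p q
    by (metis mult_le_mono nat_mult_1_right)
  have p0: "p > 0" using p by simp
  define v where "v i j = p*(i-1) + bb p n (j-1) + 1" for i j
  have Gv: "G p q i j = real (v i j)" if "i \<in> {1..n}" "j \<in> {1..n}" for i j
    using that unfolding G_def v_def n_def by simp
  have G0: "G p q i j = 0" if "\<not> (i \<in> {1..n} \<and> j \<in> {1..n})" for i j
    unfolding G_def n_def[symmetric] by (rule if_not_P[OF that])
  have ms: "matrix_of_size n (G p q)" unfolding matrix_of_size_def using G0 by blast
  have refl: "n + 1 - j \<in> {1..n}" if "j \<in> {1..n}" for j using that by auto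
  have rowc: "G p q i j + G p q i (n+1-j) = real (2*(p*(i-1)) + 2 + ((p-1) + p*n*(q-1)))"
    if "i \<in> {1..n}" "j \<in> {1..n}" for i j
  proof -
    have u: "j - 1 < p*q" using that unfolding n_def by auto
    have e: "n + 1 - j - 1 = p*q - 1 - (j-1)" using that unfolding n_def by auto
    have "v i j + v i (n+1-j) = 2*(p*(i-1)) + 2 + (bb p n (j-1) + bb p n (p*q - 1 - (j-1)))"
      unfolding v_def e by simp
    also have "\<dots> = 2*(p*(i-1)) + 2 + ((p-1) + p*n*(q-1))" using bb_sym[OF p0 u] by simp
    finally show ?thesis using Gv[OF that] Gv[OF that(1) refl[OF that(2)]] by (metis of_nat_add)
  qed
  have colc: "G p q i j + G p q (n+1-i) j = real (p*(n-1) + 2*bb p n (j-1) + 2)"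
    if "i \<in> {1..n}" "j \<in> {1..n}" for i j
  proof -
    have e: "(i - 1) + (n + 1 - i - 1) = n - 1" using that by auto
    have "p*(i-1) + p*(n+1-i-1) = p*(n-1)" by (metis e add_mult_distrib2)
    then have "v i j + v (n+1-i) j = p*(n-1) + 2*bb p n (j-1) + 2" unfolding v_def by simp
    then show ?thesis using Gv[OF that] Gv[OF refl[OF that(1)] that(2)] by (metis of_nat_add)
  qed
  have R: "reversible_square n (G p q)"
    unfolding reversible_square_def
  proof (intro conjI ms ballI)
    fix i j k assume h: "i \<in> {1..n}" "j \<in> {1..n}" "k \<in> {1..n}"
    show "G p q i j + G p q i (n + 1 - j) = G p q i k + G p q i (n + 1 - k)"
      using rowc[OF h(1) h(2)] rowc[OF h(1) h(3)] by simp
    show "G p q i j + G p q (n + 1 - i) j = G p q k j + G p q (n + 1 - k) j"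
      using colc[OF h(1) h(2)] colc[OF h(3) h(2)] by simp
  next
    fix i j k l assume h: "i \<in> {1..n}" "j \<in> {1..n}" "k \<in> {1..n}" "l \<in> {1..n}"
    have "v i j + v k l = v i l + v k j" unfolding v_def by simp
    then show "G p q i j + G p q k l = G p q i l + G p q k j"
      using Gv h by (metis of_nat_add)
  qed
  have vimg: "(\<lambda>(i,j). v i j) ` ({1..n} \<times> {1..n}) = {1..n^2}"
  proof
    show "(\<lambda>(i,j). v i j) ` ({1..n} \<times> {1..n}) \<subseteq> {1..n^2}"
    proof clarify
      fix i j assume "i \<in> {1..n}" "j \<in> {1..n}"
      then have "v i j \<le> n^2" unfolding v_def n_def using val_bound[OF p0, of i q "j-1"] by auto
      then show "v i j \<in> {1..n^2}" unfolding v_def by simp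
    qed
  next
    show "{1..n^2} \<subseteq> (\<lambda>(i,j). v i j) ` ({1..n} \<times> {1..n})"
    proof
      fix w assume w: "w \<in> {1..n^2}"
      then have "w - 1 < (p*q)^2" unfolding n_def by auto
      then obtain i j where ij: "i \<in> {1..n}" "j \<in> {1..n}" "v i j = w - 1 + 1"
        using val_surj[OF p0 _, of q "w-1"] q unfolding v_def n_def by auto
      then have "w = (\<lambda>(i,j). v i j) (i,j)" using w by simp
      then show "w \<in> (\<lambda>(i,j). v i j) ` ({1..n} \<times> {1..n})" using ij by blast
    qed
  qed
  have Gimg: "(\<lambda>(i,j). G p q i j) ` ({1..n} \<times> {1..n}) = real ` ((\<lambda>(i,j). v i j) ` ({1..n} \<times> {1..n}))"
    unfolding image_image by (rule image_cong) (auto simp: Gv)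
  have ent: "{G p q i j | i j. i \<in> {1..n} \<and> j \<in> {1..n}} = real ` {1..n^2}"
    unfolding entries_eq' Gimg vimg ..
  have rows: "\<forall>i\<in>{1..n}. \<forall>j\<in>{1..n}. \<forall>j'\<in>{1..n}. j < j' \<longrightarrow> G p q i j < G p q i j'"
  proof (intro ballI impI)
    fix i j j' assume h: "i \<in> {1..n}" "j \<in> {1..n}" "j' \<in> {1..n}" "j < j'"
    have "j - 1 < j' - 1" using h by auto
    then have "bb p n (j-1) < bb p n (j'-1)" using bb_mono[OF p0] n2 by simp
    then have "v i j < v i j'" unfolding v_def by simp
    then show "G p q i j < G p q i j'" using Gv h by simp
  qed
  have cols: "\<forall>j\<in>{1..n}. \<forall>i\<in>{1..n}. \<forall>i'\<in>{1..n}. i < i' \<longrightarrow> G p q i j < G p q i' j"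
  proof (intro ballI impI)
    fix j i i' assume h: "j \<in> {1..n}" "i \<in> {1..n}" "i' \<in> {1..n}" "i < i'"
    have "i - 1 < i' - 1" using h by auto
    then have "p*(i-1) < p*(i'-1)" using p0 by simp
    then have "v i j < v i' j" unfolding v_def by simp
    then show "G p q i j < G p q i' j" using Gv h by simp
  qed
  have one: "1 \<in> {1..n}" "2 \<in> {1..n}" using n2 by auto
  have v11: "v 1 1 = 1" unfolding v_def bb_def by simp
  have v12: "v 1 2 = 2" unfolding v_def bb_def using p by simp
  have I: "G p q (idx n 1) (idx n 1) = 1 \<and> G p q (idx n 1) (idx n 2) = 2"
    using idx1'[of n] idx2'[OF n2] n2 Gv[OF one(1) one(1)] Gv[OF one(1) one(2)] v11 v12 by simp
  show ?thesis unfolding n_def[symmetric] principal_reversible_square_def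
    using R ent rows cols I by blast
qed



lemma small_none:
  assumes "n < 2" shows "\<not> principal_reversible_square n M"
proof
  assume P: "principal_reversible_square n M"
  have I: "M (idx n 1) (idx n 1) = 1 \<and> M (idx n 1) (idx n 2) = 2"
    using P unfolding principal_reversible_square_def by blast
  have ms: "matrix_of_size n M"
    using P unfolding principal_reversible_square_def reversible_square_def by blast
  consider "n = 0" | "n = 1" using assms by linarith
  then show False
  proof cases
    case 1
    then have "idx n 1 = 1" by (simp add: idx_def)
    moreover have "M 1 1 = 0" using ms 1 unfolding matrix_of_size_def by simp
    ultimately show False using I by simp
  next
    case 2
    then have i1: "idx n 1 = 1" and i2: "idx n 2 = 1" by (simp_all add: idx_def)
    have a: "M (idx n 1) (idx n 1) = 1" using I by (rule conjunct1)
    have b: "M (idx n 1) (idx n 2) = 2" using I by (rule conjunct2)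
    have "M 1 1 = 1" using a unfolding i1 .
    moreover have "M 1 1 = 2" using b unfolding i1 i2 .
    ultimately show False by simp
  qed
qed

lemma std_G: "std n = G n 1"
proof (rule ext, rule ext)
  fix i j
  show "std n i j = G n 1 i j"
  proof (cases "i \<in> {1..n} \<and> j \<in> {1..n}")
    case True
    then have "j - 1 < n" by auto
    then have "bb n n (j-1) = j - 1" unfolding bb_def by simp
    then have "n*(i-1) + bb n n (j-1) + 1 = (i-1)*n + j" using True by (simp add: mult.commute)
    then show ?thesis using True unfolding std_def G_def by simp
  next
    case False
    have "std n i j = 0" unfolding std_def by (rule if_not_P[OF False])
    moreover have "G n 1 i j = 0" unfolding G_def mult_1_right by (rule if_not_P[OF False])
    ultimately show ?thesis by simp
  qed
qed

theorem corollary3: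
  fixes n :: nat
  shows "card {M. principal_reversible_square n M} = 1 \<longleftrightarrow> prime n"
proof
  assume c: "card {M. principal_reversible_square n M} = 1"
  then obtain M0 where S: "{M. principal_reversible_square n M} = {M0}" by (rule card_1_singletonE)
  have PM0: "principal_reversible_square n M0" using S by blast
  show "prime n"
  proof (rule ccontr)
    assume np: "\<not> prime n"
    have n2: "n \<ge> 2" using small_none[of n M0] PM0 by linarith
    then obtain p where pd: "p dvd n" "p \<noteq> 1" "p \<noteq> n" using np prime_nat_iff by auto
    from pd(1) obtain q where nq: "n = p*q" by (rule dvdE)
    have p0: "p \<noteq> 0"
    proof
      assume "p = 0" then have "n = 0" using nq by simp
      then show False using n2 by simp
    qed
    have q0: "q \<noteq> 0"
    proof
      assume "q = 0" then have "n = 0" using nq by simp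
      then show False using n2 by simp
    qed
    have q1: "q \<noteq> 1" using nq pd by auto
    have p2: "p \<ge> 2" using p0 pd by linarith
    have q2: "q \<ge> 2" using q0 q1 by linarith
    have pn: "p < n"
    proof -
      have "p*1 \<le> p*q" using q0 by (intro mult_le_mono2) simp
      then show ?thesis using pd nq by simp
    qed
    have P1: "principal_reversible_square n (G p q)" using G_principal[of p q] p2 q2 nq by simp
    have P2: "principal_reversible_square n (G n 1)" using G_principal[of n 1] n2 by simp
    have "G p q \<in> {M0}" using P1 unfolding S[symmetric] by simp
    moreover have "G n 1 \<in> {M0}" using P2 unfolding S[symmetric] by simp
    ultimately have "G p q = G n 1" by simp
    then have eq: "G p q 1 (p+1) = G n 1 1 (p+1)" by simp
    have r: "1 \<in> {1..n}" "p + 1 \<in> {1..n}" using pn n2 by auto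
    have b1: "bb p n p = p*n" unfolding bb_def using p0 by simp
    have b2: "bb n n p = p" unfolding bb_def using pn by simp
    have "G p q 1 (p+1) = real (p*n + 1)" using r b1 nq unfolding G_def by simp
    moreover have "G n 1 1 (p+1) = real (p + 1)" using r b2 unfolding G_def by simp
    ultimately have "p*n = p*1" using eq by simp
    then have "n = 1" using p0 by (metis mult_cancel1)
    then show False using n2 by simp
  qed
next
  assume pn: "prime n"
  have n2: "n \<ge> 2" using pn prime_ge_2_nat by blast
  have "{M. principal_reversible_square n M} = {std n}"
  proof
    show "{M. principal_reversible_square n M} \<subseteq> {std n}" using prime_unique[OF pn] by blast
    show "{std n} \<subseteq> {M. principal_reversible_square n M}"
      using G_principal[of n 1] n2 std_G by simp
  qed
  then show "card {M. principal_reversible_square n M} = 1" by simp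
qed

end
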